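(* Let $\mathsf{C},\mathsf{E}$ be finite-dimensional Hilbert spaces and $\mathsf{A}\cong\mathsf{A}'$ finite-dimensional with $d=\dim\mathsf{A}\ge2$. For every operator $Y\in\mathcal{B}(\mathsf{A}'\otimes\mathsf{C}\otimes\mathsf{A}\otimes\mathsf{E})$, \[ \mathbf{E}_{U\sim\mathds{U}(\mathsf{A})}\Big\|\Theta(Y)(U)-\mathbf{E}_{V\sim\mathds{U}(\mathsf{A})}\Theta(Y)(V)\Big\|_2^2\le\frac43\,\|Y\|_2^2 . \] Equivalently, the map $\Theta\circ(\mathrm{id}-\mathrm{E}_A)$ has norm at most $2/\sqrt3$ from $S_2(\mathsf{A}'\otimes\mathsf{C}\otimes\mathsf{A}\otimes\mathsf{E})$ to $L_2(\mathds{U}(\mathsf{A}),S_2(\mathsf{C}\otimes\mathsf{E}))$.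
   Context: $|\Phi\rangle=d^{-1/2}\sum_i|i\rangle_{A'}|i\rangle_A$. The decoupling map $\Theta$ sends $Y\in\mathcal{B}(\mathsf{A}'\otimes\mathsf{C}\otimes\mathsf{A}\otimes\mathsf{E})$ to the $\mathcal{B}(\mathsf{C}\otimes\mathsf{E})$-valued function on the unitary group $\mathds{U}(\mathsf{A})$ given by $\Theta(Y)(U)=d^2\,(\langle\Phi|_{A'A}\otimes\mathds{1}_{CE})\,U_AYU_A^\dagger\,(|\Phi\rangle_{A'A}\otimes\mathds{1}_{CE})$ (with $U_A$ acting on $\mathsf{A}$ only). $\mathrm{E}_A(X)=\frac{\mathds{1}_A}{d}\otimes\mathrm{Tr}_A X$ is the completely depolarizing map on $\mathsf{A}$; note $\mathbf{E}_V\Theta(Y)(V)=\Theta(\mathrm{E}_A Y)(U)$ for all $U$. $\mathbf{E}$ denotes Haar average. $\|\cdot\|_p$ is the Schatten $p$-norm; $\|X\|_{L_p(\mathds{U}(\mathsf{A}),S_p)}=(\mathbf{E}_U\|X(U)\|_p^p)^{1/p}$. *)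

theory Defs
  imports "HOL-Analysis.Analysis" "HOL-Probability.Probability"
begin

text \<open>Operators on A (dim d = CARD('a)) are d x d complex matrices, of type complex^'a^'a,
  with U $ i $ k the (i,k) entry in the computational basis |i>.\<close>

definition ctrans :: "complex^'a^'a \<Rightarrow> complex^'a^'a" where
  "ctrans U = (\<chi> i j. cnj (U $ j $ i))"

definition unitary_mat :: "complex^'a^'a \<Rightarrow> bool" where
  "unitary_mat U \<longleftrightarrow> U ** ctrans U = mat 1 \<and> ctrans U ** U = mat 1"

text \<open>Haar probability measure on the unitary group U(A): a Borel probability measure on the
  matrices, concentrated on the unitaries and invariant under left multiplication by unitaries
  (this characterises Haar measure uniquely).\<close>

definition haar_measure :: "(complex^'a^'a) measure \<Rightarrow> bool" where
  "haar_measure \<mu> \<longleftrightarrow> prob_space \<mu> \<and> sets \<mu> = sets borel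
     \<and> emeasure \<mu> {U. unitary_mat U} = 1
     \<and> (\<forall>U. unitary_mat U \<longrightarrow> distr \<mu> \<mu> (\<lambda>V. U ** V) = \<mu>)"

text \<open>Operators on A'\<otimes>C\<otimes>A\<otimes>E are matrices indexed by ('a \<times> 'c \<times> 'a \<times> 'e);
  operators on C\<otimes>E by ('c \<times> 'e).  Theta Y U is
  d^2 (<Phi|_{A'A} \<otimes> 1) U_A Y U_A^* (|Phi>_{A'A} \<otimes> 1), with |Phi> = d^{-1/2} \<Sum>_i |i>|i>,
  written out in matrix entries.\<close>

definition Theta ::
  "('a::finite \<times> 'c::finite \<times> 'a \<times> 'e::finite \<Rightarrow> 'a \<times> 'c \<times> 'a \<times> 'e \<Rightarrow> complex)
    \<Rightarrow> complex^'a^'a \<Rightarrow> ('c \<times> 'e \<Rightarrow> 'c \<times> 'e \<Rightarrow> complex)" where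
  "Theta Y U = (\<lambda>(c, e) (c', e').
     of_nat (CARD('a))^2 * (1 / of_nat (CARD('a))) *
     (\<Sum>i\<in>UNIV. \<Sum>j\<in>UNIV. \<Sum>k\<in>UNIV. \<Sum>l\<in>UNIV.
        U $ i $ k * Y (i, c, k, e) (j, c', l, e') * cnj (U $ j $ l)))"

definition hs_norm_sq :: "('i::finite \<Rightarrow> 'i \<Rightarrow> complex) \<Rightarrow> real" where
  "hs_norm_sq X = (\<Sum>x\<in>UNIV. \<Sum>y\<in>UNIV. (cmod (X x y))^2)"

end

theory Submission
  imports Defs
begin


lemma ifz_mult[simp]: "(if P then a else 0) * (b::complex) = (if P then a*b else 0)" by simp
lemma mult_ifz[simp]: "(b::complex) * (if P then a else 0) = (if P then b*a else 0)" by simp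
lemma cnj_if: "cnj (if P then a else b) = (if P then cnj a else cnj b)" by simp

definition wd :: "'a \<Rightarrow> 'a \<Rightarrow> complex" where "wd x i = (if i = x then \<i> else 1)"
lemma wd_cnj[simp]: "wd x i * cnj (wd x i) = 1" "cnj (wd x i) * wd x i = 1"
  by (auto simp: wd_def)

definition Dg :: "'a::finite \<Rightarrow> complex^'a^'a" where
  "Dg x = (\<chi> i j. if j = i then wd x i else 0)"

lemma Dg_unitary: "unitary_mat (Dg x)"
  unfolding unitary_mat_def
  by (auto simp: vec_eq_iff matrix_matrix_mult_def ctrans_def mat_def Dg_def cnj_if eq_commute)

definition sw :: "'a \<Rightarrow> 'a \<Rightarrow> 'a \<Rightarrow> 'a" where
  "sw p q i = (if i = p then q else if i = q then p else i)"

definition Pm :: "'a::finite \<Rightarrow> 'a \<Rightarrow> complex^'a^'a" where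
  "Pm p q = (\<chi> i j. if j = sw p q i then 1 else 0)"

lemma sw_sw[simp]: "sw p q (sw p q i) = i" by (simp add: sw_def)
lemma sw_eq: "(j = sw p q i) = (i = sw p q j)" by (auto simp: sw_def)

lemma Pm_unitary: "unitary_mat (Pm p q)"
proof -
  have c: "ctrans (Pm p q) = Pm p q"
    by (auto simp: vec_eq_iff ctrans_def Pm_def sw_eq)
  have "(Pm p q ** Pm p q)$i$j = mat 1 $ i $ j" for i j
  proof -
    have "(Pm p q ** Pm p q)$i$j = (\<Sum>k\<in>UNIV. if k = sw p q i then (if j = sw p q k then 1 else 0) else 0)"
      unfolding matrix_matrix_mult_def Pm_def vec_lambda_beta by (rule sum.cong) (auto simp del: ifz_mult mult_ifz)
    also have "\<dots> = (if j = i then 1 else 0)" by (subst sum.delta) auto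
    finally show ?thesis by (simp add: mat_def)
  qed
  hence "Pm p q ** Pm p q = mat 1" by (simp add: vec_eq_iff)
  thus ?thesis using c unfolding unitary_mat_def by simp
qed

definition hh :: complex where "hh = complex_of_real (1 / sqrt 2)"
lemma hh_sq: "hh * hh = 1/2"
  unfolding hh_def by (simp flip: of_real_mult)

definition Hd :: "'a::finite \<Rightarrow> 'a \<Rightarrow> complex^'a^'a" where
  "Hd p q = (\<chi> i j. if (i = p \<or> i = q) \<and> (j = p \<or> j = q) then
      (if i = q \<and> j = q then - hh else hh)
      else (if i = j then 1 else 0))"

lemma sum_split2:
  fixes f :: "'a::finite \<Rightarrow> complex"
  assumes "p \<noteq> q"
  shows "(\<Sum>k\<in>UNIV. f k) = f p + f q + (\<Sum>k\<in>UNIV - {p,q}. f k)"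
proof -
  have "(\<Sum>k\<in>UNIV. f k) = (\<Sum>k\<in>{p,q}. f k) + (\<Sum>k\<in>UNIV - {p,q}. f k)"
    by (metis add.commute finite sum.subset_diff top_greatest)
  thus ?thesis using assms by simp
qed

lemma Hd_unitary:
  assumes pq: "p \<noteq> q"
  shows "unitary_mat (Hd p q)"
proof -
  have c: "ctrans (Hd p q) = Hd p q"
    by (auto simp: vec_eq_iff ctrans_def Hd_def hh_def)
  have rest: "(\<Sum>k\<in>UNIV - {p,q}. Hd p q $ i $ k * Hd p q $ k $ j) = (if i \<notin> {p,q} then Hd p q $ i $ j else 0)" for i j
  proof -
    have "(\<Sum>k\<in>UNIV - {p,q}. Hd p q $ i $ k * Hd p q $ k $ j) = (\<Sum>k\<in>UNIV - {p,q}. if k = i then Hd p q $ i $ j else 0)"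
      by (rule sum.cong) (auto simp: Hd_def)
    also have "\<dots> = (if i \<notin> {p,q} then Hd p q $ i $ j else 0)"
      by (simp add: sum.delta)
    finally show ?thesis .
  qed
  have "(Hd p q ** Hd p q) $ i $ j = mat 1 $ i $ j" for i j
    unfolding matrix_matrix_mult_def using pq
    by (simp add: sum_split2[OF pq] rest) (auto simp: Hd_def mat_def hh_sq)
  hence "Hd p q ** Hd p q = mat 1" by (simp add: vec_eq_iff)
  thus ?thesis using c unfolding unitary_mat_def by simp
qed


lemma prod4_sum:
  fixes a b c d :: "'i \<Rightarrow> complex"
  shows "sum a A * sum b B * sum c C * sum d D = (\<Sum>x1\<in>A. \<Sum>x2\<in>B. \<Sum>y1\<in>C. \<Sum>y2\<in>D. a x1 * b x2 * c y1 * d y2)"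
  by (simp only: sum_distrib_left[symmetric] sum_distrib_right[symmetric])

lemma unitary_col:
  assumes "unitary_mat (U::complex^'a::finite^'a)"
  shows "(\<Sum>a\<in>UNIV. cnj (U$a$b) * U$a$e) = (if b = e then 1 else 0)"
proof -
  have "(ctrans U ** U) $ b $ e = mat 1 $ b $ e" using assms unfolding unitary_mat_def by simp
  then show ?thesis by (simp add: matrix_matrix_mult_def ctrans_def mat_def)
qed

lemma unitary_entry_le1:
  assumes "unitary_mat (U::complex^'a::finite^'a)"
  shows "cmod (U$a$b) \<le> 1"
proof -
  have "(\<Sum>x\<in>UNIV. cnj (U$x$b) * U$x$b) = 1" using unitary_col[OF assms, of b b] by simp
  moreover have "\<And>x. cnj (U$x$b) * U$x$b = complex_of_real ((cmod (U$x$b))^2)"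
    by (metis complex_norm_square mult.commute of_real_power)
  ultimately have "(\<Sum>x\<in>UNIV. complex_of_real ((cmod (U$x$b))^2)) = 1"
    by simp
  hence s: "(\<Sum>x\<in>UNIV. (cmod (U$x$b))^2) = 1"
    by (metis of_real_eq_1_iff of_real_sum)
  have "(cmod (U$a$b))^2 \<le> (\<Sum>x\<in>UNIV. (cmod (U$x$b))^2)"
    by (rule member_le_sum) auto
  with s have "(cmod (U$a$b))^2 \<le> 1" by simp
  thus ?thesis by (simp add: power_le_one_iff abs_le_square_iff)
qed

lemma cnj_ifz[simp]: "cnj (if P then a else 0) = (if P then cnj a else 0)" by simp
lemma sum_if_const[simp]: "(\<Sum>y\<in>S. if P then f y else (0::complex)) = (if P then (\<Sum>y\<in>S. f y) else 0)"
  by simp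
lemma cnj_Dg[simp]: "cnj (Dg x $ i $ j) = (if j = i then cnj (wd x i) else 0)"
  by (simp add: Dg_def)
lemma cnj_Pm[simp]: "cnj (Pm p q $ i $ j) = Pm p q $ i $ j"
  by (simp add: Pm_def)

lemma prod_sum2:
  fixes f g :: "'a \<Rightarrow> 'b \<Rightarrow> complex"
  shows "(\<Sum>i\<in>A. \<Sum>k\<in>B. f i k) * (\<Sum>i\<in>A. \<Sum>k\<in>B. g i k) = (\<Sum>i\<in>A. \<Sum>k\<in>B. \<Sum>i'\<in>A. \<Sum>k'\<in>B. f i k * g i' k')"
  by (simp only: sum_distrib_left[symmetric] sum_distrib_right[symmetric])

context
  fixes B :: "'a::finite \<Rightarrow> 'a \<Rightarrow> 'a \<Rightarrow> 'a \<Rightarrow> complex"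
begin

lemma S11:
  shows "(\<Sum>i\<in>UNIV. \<Sum>j\<in>UNIV. \<Sum>k\<in>UNIV. \<Sum>l\<in>UNIV. \<Sum>i'\<in>UNIV. \<Sum>j'\<in>UNIV. \<Sum>k'\<in>UNIV. \<Sum>l'\<in>UNIV.
     B i k j l * cnj (B i' k' j' l') * ((if i = j then 1 else 0) * (if j' = i' then 1 else 0) * (if k = l then 1 else 0) * (if l' = k' then 1 else 0)))
   = (\<Sum>i\<in>UNIV. \<Sum>k\<in>UNIV. B i k i k) * cnj (\<Sum>i\<in>UNIV. \<Sum>k\<in>UNIV. B i k i k)" (is "?LHS = ?RHS")
  proof -
  have "?LHS = (\<Sum>i\<in>UNIV. \<Sum>k\<in>UNIV. \<Sum>i'\<in>UNIV. \<Sum>k'\<in>UNIV. B i k i k * cnj (B i' k' i' k'))" by simp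
  also have "\<dots> = ?RHS" unfolding prod_sum2 cnj_sum ..
  finally show ?thesis .
qed

lemma S1Y:
  shows "(\<Sum>i\<in>UNIV. \<Sum>j\<in>UNIV. \<Sum>k\<in>UNIV. \<Sum>l\<in>UNIV. \<Sum>i'\<in>UNIV. \<Sum>j'\<in>UNIV. \<Sum>k'\<in>UNIV. \<Sum>l'\<in>UNIV.
     B i k j l * cnj (B i' k' j' l') * ((if i = j then 1 else 0) * (if j' = i' then 1 else 0) * (if k = k' then 1 else 0) * (if l' = l then 1 else 0)))
   = of_real (\<Sum>k\<in>UNIV. \<Sum>l\<in>UNIV. (cmod (\<Sum>i\<in>UNIV. B i k i l))^2)" (is "?LHS = ?RHS")
proof -
  have "?LHS = (\<Sum>i\<in>UNIV. \<Sum>k\<in>UNIV. \<Sum>l\<in>UNIV. \<Sum>i'\<in>UNIV. B i k i l * cnj (B i' k i' l))" by simp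
  also have "\<dots> = (\<Sum>k\<in>UNIV. \<Sum>i\<in>UNIV. \<Sum>l\<in>UNIV. \<Sum>i'\<in>UNIV. B i k i l * cnj (B i' k i' l))"
    by (rule sum.swap)
  also have "\<dots> = (\<Sum>k\<in>UNIV. \<Sum>l\<in>UNIV. \<Sum>i\<in>UNIV. \<Sum>i'\<in>UNIV. B i k i l * cnj (B i' k i' l))"
    by (rule sum.cong[OF refl], rule sum.swap)
  also have "\<dots> = (\<Sum>k\<in>UNIV. \<Sum>l\<in>UNIV. (\<Sum>i\<in>UNIV. B i k i l) * cnj (\<Sum>i\<in>UNIV. B i k i l))"
    by (simp add: sum_product cnj_sum)
  also have "\<dots> = ?RHS"
    by (simp only: of_real_sum complex_norm_square)
  finally show ?thesis .
qed

lemma S2Y: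
  shows "(\<Sum>i\<in>UNIV. \<Sum>j\<in>UNIV. \<Sum>k\<in>UNIV. \<Sum>l\<in>UNIV. \<Sum>i'\<in>UNIV. \<Sum>j'\<in>UNIV. \<Sum>k'\<in>UNIV. \<Sum>l'\<in>UNIV.
     B i k j l * cnj (B i' k' j' l') * ((if i = i' then 1 else 0) * (if j' = j then 1 else 0) * (if k = k' then 1 else 0) * (if l' = l then 1 else 0)))
   = of_real (\<Sum>i\<in>UNIV. \<Sum>j\<in>UNIV. \<Sum>k\<in>UNIV. \<Sum>l\<in>UNIV. (cmod (B i k j l))^2)"
  by (simp only: of_real_sum complex_norm_square) simp

lemma S2X:
  shows "(\<Sum>i\<in>UNIV. \<Sum>j\<in>UNIV. \<Sum>k\<in>UNIV. \<Sum>l\<in>UNIV. \<Sum>i'\<in>UNIV. \<Sum>j'\<in>UNIV. \<Sum>k'\<in>UNIV. \<Sum>l'\<in>UNIV.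
     B i k j l * cnj (B i' k' j' l') * ((if i = i' then 1 else 0) * (if j' = j then 1 else 0) * (if k = l then 1 else 0) * (if l' = k' then 1 else 0)))
   = of_real (\<Sum>i\<in>UNIV. \<Sum>j\<in>UNIV. (cmod (\<Sum>k\<in>UNIV. B i k j k))^2)" (is "?LHS = ?RHS")
proof -
  have "?LHS = (\<Sum>i\<in>UNIV. \<Sum>j\<in>UNIV. \<Sum>k\<in>UNIV. \<Sum>k'\<in>UNIV. B i k j k * cnj (B i k' j k'))" by simp
  also have "\<dots> = (\<Sum>i\<in>UNIV. \<Sum>j\<in>UNIV. (\<Sum>k\<in>UNIV. B i k j k) * cnj (\<Sum>k\<in>UNIV. B i k j k))"
    by (simp add: sum_product cnj_sum)
  also have "\<dots> = ?RHS"
    by (simp only: of_real_sum complex_norm_square)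
  finally show ?thesis .
qed
end



definition sum8 :: "('a::finite \<Rightarrow> 'a \<Rightarrow> 'a \<Rightarrow> 'a \<Rightarrow> 'a \<Rightarrow> 'a \<Rightarrow> 'a \<Rightarrow> 'a \<Rightarrow> complex) \<Rightarrow> complex" where
  "sum8 F = (\<Sum>i\<in>UNIV. \<Sum>j\<in>UNIV. \<Sum>k\<in>UNIV. \<Sum>l\<in>UNIV. \<Sum>i'\<in>UNIV. \<Sum>j'\<in>UNIV. \<Sum>k'\<in>UNIV. \<Sum>l'\<in>UNIV. F i j k l i' j' k' l')"

lemma sum8_lin:
  "sum8 (\<lambda>i j k l i' j' k' l'. (d * f1 i j k l i' j' k' l' - f2 i j k l i' j' k' l' + d * f3 i j k l i' j' k' l' - f4 i j k l i' j' k' l') / D)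
   = (d * sum8 f1 - sum8 f2 + d * sum8 f3 - sum8 f4) / D"
  unfolding sum8_def
  by (simp add: sum.distrib sum_subtractf sum_divide_distrib sum_distrib_left diff_divide_distrib add_divide_distrib)

definition ind :: "bool \<Rightarrow> complex" where "ind P = (if P then 1 else 0)"

lemma ind_identity:
  fixes d D :: complex
  shows "(if P1 \<and> P2 then (d * ind (X1 \<and> X2) - ind (Y1 \<and> Y2)) / D else 0)
       + (if Q1 \<and> Q2 then (d * ind (Y1 \<and> Y2) - ind (X1 \<and> X2)) / D else 0)
     = (d * (ind P1 * ind P2 * ind X1 * ind X2) - ind P1 * ind P2 * ind Y1 * ind Y2
        + d * (ind Q1 * ind Q2 * ind Y1 * ind Y2) - ind Q1 * ind Q2 * ind X1 * ind X2) / D"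
  unfolding ind_def
  by (cases P1; cases P2; cases Q1; cases Q2; simp; cases X1; cases X2; cases Y1; cases Y2; simp add: diff_divide_distrib)

lemma cs_sum:
  fixes z :: "'a::finite \<Rightarrow> complex"
  shows "(cmod (\<Sum>i\<in>UNIV. z i))^2 \<le> real CARD('a) * (\<Sum>i\<in>UNIV. (cmod (z i))^2)"
proof -
  have "cmod (\<Sum>i\<in>UNIV. z i) \<le> (\<Sum>i\<in>UNIV. cmod (z i))" by (rule norm_sum)
  hence "(cmod (\<Sum>i\<in>UNIV. z i))^2 \<le> (\<Sum>i\<in>UNIV. cmod (z i))^2"
    by (rule power_mono) simp
  also have "\<dots> \<le> (\<Sum>i\<in>UNIV. (cmod (z i))^2) * card (UNIV::'a set)"
    by (rule sum_squared_le_sum_of_squares)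
  finally show ?thesis by (simp add: mult.commute)
qed


lemma final_ineq:
  fixes dr t pa pb n :: real
  assumes d: "dr \<ge> 2" and a: "t \<le> dr * pa" and b: "t \<le> dr * pb" and t: "t \<ge> 0" and n: "n \<ge> 0"
  shows "dr^2 * (dr * t - pb + dr * n - pa) / (dr * (dr^2 - 1)) - t \<le> 4/3 * n"
proof -
  have dp: "dr > 0" using d by simp
  have sq: "dr^2 \<ge> 4"
  proof -
    have "2 * 2 \<le> dr * dr" using d by (intro mult_mono) auto
    thus ?thesis by (simp add: power2_eq_square)
  qed
  have q: "dr^2 - 1 > 0" using sq by simp
  have e: "dr^2 * (dr * t - pb + dr * n - pa) / (dr * (dr^2 - 1)) = dr * (dr * t - pb + dr * n - pa) / (dr^2 - 1)"
    using dp by (simp add: power2_eq_square)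
  have num: "dr * (dr * t - pb + dr * n - pa) \<le> dr^2 * t - 2 * t + dr^2 * n"
    using a b by (simp add: power2_eq_square algebra_simps)
  have "dr * (dr * t - pb + dr * n - pa) / (dr^2 - 1) - t \<le> (dr^2 * t - 2 * t + dr^2 * n) / (dr^2 - 1) - t"
    using num q by (simp add: divide_right_mono)
  also have "\<dots> = (dr^2 * n - t) / (dr^2 - 1)"
    using q by (simp add: field_simps)
  also have "\<dots> \<le> dr^2 * n / (dr^2 - 1)"
    using q t by (simp add: divide_right_mono)
  also have "\<dots> \<le> 4/3 * n"
  proof -
    from sq have "3 * (dr^2 * n) \<le> 4 * n * (dr^2 - 1)" using n mult_right_mono[OF sq n] by (simp add: algebra_simps)
    thus ?thesis using q by (simp add: divide_le_eq field_simps)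
  qed
  finally show ?thesis using e by simp
qed


definition SB :: "('a::finite \<Rightarrow> 'a \<Rightarrow> 'a \<Rightarrow> 'a \<Rightarrow> complex) \<Rightarrow> complex^'a^'a \<Rightarrow> complex" where
  "SB B U = (\<Sum>i\<in>UNIV. \<Sum>j\<in>UNIV. \<Sum>k\<in>UNIV. \<Sum>l\<in>UNIV. U$i$k * B i k j l * cnj (U$j$l))"

lemma prod_sum4:
  fixes f g :: "'a \<Rightarrow> 'a \<Rightarrow> 'a \<Rightarrow> 'a \<Rightarrow> complex"
  shows "(\<Sum>i\<in>A. \<Sum>j\<in>A. \<Sum>k\<in>A. \<Sum>l\<in>A. f i j k l) * (\<Sum>i\<in>A. \<Sum>j\<in>A. \<Sum>k\<in>A. \<Sum>l\<in>A. g i j k l)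
    = (\<Sum>i\<in>A. \<Sum>j\<in>A. \<Sum>k\<in>A. \<Sum>l\<in>A. \<Sum>i'\<in>A. \<Sum>j'\<in>A. \<Sum>k'\<in>A. \<Sum>l'\<in>A. f i j k l * g i' j' k' l')"
  by (simp only: sum_distrib_left[symmetric] sum_distrib_right[symmetric])

lemma SS_pointwise:
  "SB B U * cnj (SB B U) = sum8 (\<lambda>i j k l i' j' k' l'. B i k j l * cnj (B i' k' j' l') *
      (U$i$k * U$j'$l' * cnj (U$j$l) * cnj (U$i'$k')))"
  unfolding SB_def sum8_def cnj_sum prod_sum4
  by (simp add: mult_ac)

lemma F_lin: "(F::complex) * ((d * a - b + d * c - e) / D) = (d * (F * a) - F * b + d * (F * c) - F * e) / D"
  by (simp add: algebra_simps diff_divide_distrib add_divide_distrib)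

context
  fixes \<mu> :: "(complex^'a::finite^'a) measure"
  assumes haar: "haar_measure \<mu>"
begin

lemma ps: "prob_space \<mu>" using haar unfolding haar_measure_def by simp
lemma sets_mu: "sets \<mu> = sets borel" using haar unfolding haar_measure_def by simp

lemma AE_unit: "AE U in \<mu>. unitary_mat U"
proof -
  interpret prob_space \<mu> by (rule ps)
  have e: "emeasure \<mu> {U. unitary_mat U} = 1" using haar unfolding haar_measure_def by simp
  hence m: "{U. unitary_mat U} \<in> sets \<mu>" using emeasure_notin_sets by force
  show ?thesis using e m by (simp add: prob_eq_1 emeasure_eq_measure)
qed

lemma meas_borel: "f \<in> borel_measurable borel \<Longrightarrow> f \<in> borel_measurable \<mu>"
  using measurable_cong_sets[OF sets_mu refl] by blast

lemma integrable_bdd: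
  fixes f :: "complex^'a^'a \<Rightarrow> 'b::{banach,second_countable_topology}"
  assumes "f \<in> borel_measurable borel" "\<And>U. unitary_mat U \<Longrightarrow> norm (f U) \<le> K"
  shows "integrable \<mu> f"
proof -
  interpret prob_space \<mu> by (rule ps)
  show ?thesis
    apply (rule integrable_const_bound[where B=K])
    using AE_unit assms(2) apply (auto elim!: AE_mp)[1]
    using meas_borel[OF assms(1)] .
qed

lemma cont_mult: "continuous_on UNIV (\<lambda>V::complex^'a^'a. W ** V)"
  unfolding matrix_matrix_mult_def
  by (intro continuous_intros)

lemma invariance:
  fixes f :: "complex^'a^'a \<Rightarrow> 'b::{banach,second_countable_topology}"
  assumes W: "unitary_mat W" and f: "f \<in> borel_measurable borel"
  shows "integral\<^sup>L \<mu> (\<lambda>V. f (W ** V)) = integral\<^sup>L \<mu> f"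
proof -
  have d: "distr \<mu> \<mu> (\<lambda>V. W ** V) = \<mu>" using haar W unfolding haar_measure_def by simp
  have T: "(\<lambda>V. W ** V) \<in> measurable \<mu> \<mu>"
    using borel_measurable_continuous_onI[OF cont_mult[of W]]
    measurable_cong_sets[OF sets_mu sets_mu] by blast
  have "integral\<^sup>L (distr \<mu> \<mu> (\<lambda>V. W ** V)) f = integral\<^sup>L \<mu> (\<lambda>V. f (W ** V))"
    by (rule integral_distr[OF T meas_borel[OF f]])
  thus ?thesis using d by simp
qed

lemma cont_entry[continuous_intros]: "continuous_on S (\<lambda>U::complex^'a^'a. U$a$b)"
  by (intro continuous_intros)

definition m1 where "m1 a b c e = (\<integral>U. U$a$b * cnj (U$c$e) \<partial>\<mu>)"
definition m2 where "m2 a1 b1 a2 b2 c1 e1 c2 e2 =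
   (\<integral>U. U$a1$b1 * U$a2$b2 * cnj (U$c1$e1) * cnj (U$c2$e2) \<partial>\<mu>)"

lemma meas4: "(\<lambda>U::complex^'a^'a. U$a1$b1 * U$a2$b2 * cnj (U$c1$e1) * cnj (U$c2$e2)) \<in> borel_measurable borel"
  by (intro borel_measurable_continuous_onI continuous_intros)
lemma meas2: "(\<lambda>U::complex^'a^'a. U$a$b * cnj (U$c$e)) \<in> borel_measurable borel"
  by (intro borel_measurable_continuous_onI continuous_intros)

lemma int4: "integrable \<mu> (\<lambda>U. U$a1$b1 * U$a2$b2 * cnj (U$c1$e1) * cnj (U$c2$e2))"
  apply (rule integrable_bdd[OF meas4, where K=1])
  by (simp add: norm_mult mult_le_one unitary_entry_le1)
lemma int2: "integrable \<mu> (\<lambda>U. U$a$b * cnj (U$c$e))"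
  apply (rule integrable_bdd[OF meas2, where K=1])
  by (simp add: norm_mult mult_le_one unitary_entry_le1)

lemma expand4:
  assumes W: "unitary_mat W"
  shows "m2 a1 b1 a2 b2 c1 e1 c2 e2 = (\<Sum>x1\<in>UNIV. \<Sum>x2\<in>UNIV. \<Sum>y1\<in>UNIV. \<Sum>y2\<in>UNIV.
     W$a1$x1 * W$a2$x2 * cnj (W$c1$y1) * cnj (W$c2$y2) * m2 x1 b1 x2 b2 y1 e1 y2 e2)"
proof -
  have "m2 a1 b1 a2 b2 c1 e1 c2 e2 = (\<integral>V. (W**V)$a1$b1 * (W**V)$a2$b2 * cnj ((W**V)$c1$e1) * cnj ((W**V)$c2$e2) \<partial>\<mu>)"
    unfolding m2_def using invariance[OF W meas4] by simp
  also have "\<dots> = (\<integral>V. (\<Sum>x1\<in>UNIV. \<Sum>x2\<in>UNIV. \<Sum>y1\<in>UNIV. \<Sum>y2\<in>UNIV.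
     W$a1$x1 * W$a2$x2 * cnj (W$c1$y1) * cnj (W$c2$y2) * (V$x1$b1 * V$x2$b2 * cnj (V$y1$e1) * cnj (V$y2$e2))) \<partial>\<mu>)"
  proof (rule arg_cong[where f="integral\<^sup>L \<mu>"], rule ext)
    fix V
    have "(W**V)$a1$b1 * (W**V)$a2$b2 * cnj ((W**V)$c1$e1) * cnj ((W**V)$c2$e2)
      = (\<Sum>x1\<in>UNIV. W$a1$x1 * V$x1$b1) * (\<Sum>x2\<in>UNIV. W$a2$x2 * V$x2$b2)
        * (\<Sum>y1\<in>UNIV. cnj (W$c1$y1) * cnj (V$y1$e1)) * (\<Sum>y2\<in>UNIV. cnj (W$c2$y2) * cnj (V$y2$e2))"
      by (simp add: matrix_matrix_mult_def cnj_sum)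
    also have "\<dots> = (\<Sum>x1\<in>UNIV. \<Sum>x2\<in>UNIV. \<Sum>y1\<in>UNIV. \<Sum>y2\<in>UNIV.
     W$a1$x1 * W$a2$x2 * cnj (W$c1$y1) * cnj (W$c2$y2) * (V$x1$b1 * V$x2$b2 * cnj (V$y1$e1) * cnj (V$y2$e2)))"
      unfolding prod4_sum by (simp add: mult_ac)
    finally show "(W**V)$a1$b1 * (W**V)$a2$b2 * cnj ((W**V)$c1$e1) * cnj ((W**V)$c2$e2) = (\<Sum>x1\<in>UNIV. \<Sum>x2\<in>UNIV. \<Sum>y1\<in>UNIV. \<Sum>y2\<in>UNIV.
     W$a1$x1 * W$a2$x2 * cnj (W$c1$y1) * cnj (W$c2$y2) * (V$x1$b1 * V$x2$b2 * cnj (V$y1$e1) * cnj (V$y2$e2)))" .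
  qed
  also have "\<dots> = (\<Sum>x1\<in>UNIV. \<Sum>x2\<in>UNIV. \<Sum>y1\<in>UNIV. \<Sum>y2\<in>UNIV.
     W$a1$x1 * W$a2$x2 * cnj (W$c1$y1) * cnj (W$c2$y2) * m2 x1 b1 x2 b2 y1 e1 y2 e2)"
    unfolding m2_def
    by (simp add: integrable_sum int4 integrable_mult_right Bochner_Integration.integral_sum)
  finally show ?thesis .
qed

lemma expand2:
  assumes W: "unitary_mat W"
  shows "m1 a b c e = (\<Sum>x\<in>UNIV. \<Sum>y\<in>UNIV. W$a$x * cnj (W$c$y) * m1 x b y e)"
proof -
  have "m1 a b c e = (\<integral>V. (W**V)$a$b * cnj ((W**V)$c$e) \<partial>\<mu>)"
    unfolding m1_def using invariance[OF W meas2] by simp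
  also have "\<dots> = (\<integral>V. (\<Sum>x\<in>UNIV. \<Sum>y\<in>UNIV. W$a$x * cnj (W$c$y) * (V$x$b * cnj (V$y$e))) \<partial>\<mu>)"
  proof (rule arg_cong[where f="integral\<^sup>L \<mu>"], rule ext)
    fix V
    have "(W**V)$a$b * cnj ((W**V)$c$e)
      = (\<Sum>x\<in>UNIV. W$a$x * V$x$b) * (\<Sum>y\<in>UNIV. cnj (W$c$y) * cnj (V$y$e))"
      by (simp add: matrix_matrix_mult_def cnj_sum)
    also have "\<dots> = (\<Sum>x\<in>UNIV. \<Sum>y\<in>UNIV. W$a$x * cnj (W$c$y) * (V$x$b * cnj (V$y$e)))"
      unfolding sum_product by (simp add: mult_ac)
    finally show "(W**V)$a$b * cnj ((W**V)$c$e) = (\<Sum>x\<in>UNIV. \<Sum>y\<in>UNIV. W$a$x * cnj (W$c$y) * (V$x$b * cnj (V$y$e)))" .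
  qed
  also have "\<dots> = (\<Sum>x\<in>UNIV. \<Sum>y\<in>UNIV. W$a$x * cnj (W$c$y) * m1 x b y e)"
    unfolding m1_def
    by (simp add: integrable_sum int2 integrable_mult_right Bochner_Integration.integral_sum)
  finally show ?thesis .
qed


lemma m1_zero:
  assumes "a \<noteq> c"
  shows "m1 a b c e = 0"
proof -
  have "m1 a b c e = (\<Sum>x\<in>UNIV. \<Sum>y\<in>UNIV. Dg a$a$x * cnj (Dg a$c$y) * m1 x b y e)"
    by (rule expand2[OF Dg_unitary])
  also have "\<dots> = \<i> * m1 a b c e" using assms by (simp add: Dg_def wd_def)
  finally have "(1 - \<i>) * m1 a b c e = 0" by (simp add: algebra_simps)
  thus ?thesis by simp
qed

lemma m1_sw: "m1 a b c e = m1 (sw p q a) b (sw p q c) e"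
proof -
  have "m1 a b c e = (\<Sum>x\<in>UNIV. \<Sum>y\<in>UNIV. Pm p q$a$x * cnj (Pm p q$c$y) * m1 x b y e)"
    by (rule expand2[OF Pm_unitary])
  also have "\<dots> = m1 (sw p q a) b (sw p q c) e" by (simp add: Pm_def)
  finally show ?thesis .
qed

lemma m1_const: "m1 a b a e = m1 a' b a' e"
  using m1_sw[of a b a e a a'] by (simp add: sw_def)

lemma m1_rowsum: "(\<Sum>a\<in>UNIV. m1 a b a e) = (if e = b then 1 else 0)"
proof -
  interpret prob_space \<mu> by (rule ps)
  have "(\<Sum>a\<in>UNIV. m1 a b a e) = (\<integral>U. (\<Sum>a\<in>UNIV. cnj (U$a$e) * U$a$b) \<partial>\<mu>)"
    unfolding m1_def by (simp add: Bochner_Integration.integral_sum int2 mult.commute)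
  also have "\<dots> = (\<integral>U. (if e = b then 1 else 0) \<partial>\<mu>)"
  proof (rule integral_cong_AE)
    show "(\<lambda>U. \<Sum>a\<in>UNIV. cnj (U$a$e) * U$a$b) \<in> borel_measurable \<mu>"
      by (intro meas_borel borel_measurable_continuous_onI continuous_intros)
    show "(\<lambda>U. if e = b then 1 else 0::complex) \<in> borel_measurable \<mu>" by simp
    show "AE U in \<mu>. (\<Sum>a\<in>UNIV. cnj (U$a$e) * U$a$b) = (if e = b then 1 else 0)"
      using AE_unit by eventually_elim (simp add: unitary_col)
  qed
  finally show ?thesis by (simp add: prob_space)
qed

lemma m1_formula: "m1 a b c e = (if a = c \<and> b = e then 1 / of_nat CARD('a) else 0)"
proof (cases "a = c")
  case True
  have "(\<Sum>a'\<in>UNIV. m1 a' b a' e) = of_nat CARD('a) * m1 a b a e"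
  proof -
    have "(\<Sum>a'\<in>UNIV. m1 a' b a' e) = (\<Sum>a'\<in>(UNIV::'a set). m1 a b a e)"
      by (rule sum.cong) (auto intro: m1_const)
    thus ?thesis by simp
  qed
  with m1_rowsum[of b e] True show ?thesis by (auto simp: field_simps)
qed (simp add: m1_zero)


lemma wd_fac:
  assumes "\<not> ((a1 = c1 \<and> a2 = c2) \<or> (a1 = c2 \<and> a2 = c1))"
  shows "wd a1 a1 * wd a1 a2 * cnj (wd a1 c1) * cnj (wd a1 c2) \<noteq> 1
       \<or> wd a2 a1 * wd a2 a2 * cnj (wd a2 c1) * cnj (wd a2 c2) \<noteq> 1"
  using assms unfolding wd_def
  by (cases "a1 = a2"; cases "a1 = c1"; cases "a1 = c2"; cases "a2 = c1"; cases "a2 = c2"; simp add: complex_eq_iff)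

lemma m2_zero:
  assumes "\<not> ((a1 = c1 \<and> a2 = c2) \<or> (a1 = c2 \<and> a2 = c1))"
  shows "m2 a1 b1 a2 b2 c1 e1 c2 e2 = 0"
proof -
  have key: "m2 a1 b1 a2 b2 c1 e1 c2 e2 = (wd x a1 * wd x a2 * cnj (wd x c1) * cnj (wd x c2)) * m2 a1 b1 a2 b2 c1 e1 c2 e2" for x
  proof -
    have "m2 a1 b1 a2 b2 c1 e1 c2 e2 = (\<Sum>x1\<in>UNIV. \<Sum>x2\<in>UNIV. \<Sum>y1\<in>UNIV. \<Sum>y2\<in>UNIV.
     Dg x$a1$x1 * Dg x$a2$x2 * cnj (Dg x$c1$y1) * cnj (Dg x$c2$y2) * m2 x1 b1 x2 b2 y1 e1 y2 e2)"
      by (rule expand4[OF Dg_unitary])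
    also have "\<dots> = (wd x a1 * wd x a2 * cnj (wd x c1) * cnj (wd x c2)) * m2 a1 b1 a2 b2 c1 e1 c2 e2"
      by (simp add: Dg_def mult_ac)
    finally show ?thesis .
  qed
  from wd_fac[OF assms] obtain x where "wd x a1 * wd x a2 * cnj (wd x c1) * cnj (wd x c2) \<noteq> 1" by blast
  moreover have "(1 - wd x a1 * wd x a2 * cnj (wd x c1) * cnj (wd x c2)) * m2 a1 b1 a2 b2 c1 e1 c2 e2 = 0"
    using key[of x] by (simp add: algebra_simps)
  ultimately show ?thesis by simp
qed

lemma m2_sw: "m2 a1 b1 a2 b2 c1 e1 c2 e2 = m2 (sw p q a1) b1 (sw p q a2) b2 (sw p q c1) e1 (sw p q c2) e2"
proof -
  have "m2 a1 b1 a2 b2 c1 e1 c2 e2 = (\<Sum>x1\<in>UNIV. \<Sum>x2\<in>UNIV. \<Sum>y1\<in>UNIV. \<Sum>y2\<in>UNIV.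
     Pm p q$a1$x1 * Pm p q$a2$x2 * cnj (Pm p q$c1$y1) * cnj (Pm p q$c2$y2) * m2 x1 b1 x2 b2 y1 e1 y2 e2)"
    by (rule expand4[OF Pm_unitary])
  also have "\<dots> = m2 (sw p q a1) b1 (sw p q a2) b2 (sw p q c1) e1 (sw p q c2) e2"
    by (simp add: Pm_def)
  finally show ?thesis .
qed

lemma sum_pq:
  assumes "p \<noteq> q"
  shows "(\<Sum>x\<in>(UNIV::'b::finite set). if x = p \<or> x = q then f x else (0::complex)) = f p + f q"
proof -
  have "(\<Sum>x\<in>UNIV. if x = p \<or> x = q then f x else (0::complex)) = (\<Sum>x\<in>{p,q}. f x)"
    by (subst sum.If_cases) (auto intro: sum.cong)
  thus ?thesis using assms by simp
qed

lemma sum_restr: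
  fixes f :: "'b::finite \<Rightarrow> complex"
  assumes "\<And>x. x \<notin> S \<Longrightarrow> f x = 0"
  shows "sum f UNIV = sum f S"
  using sum.mono_neutral_right[of UNIV S f] assms by auto

lemma sum4_pq:
  fixes F :: "'b::finite \<Rightarrow> 'b \<Rightarrow> 'b \<Rightarrow> 'b \<Rightarrow> complex"
  assumes "\<And>x1 x2 y1 y2. \<not> (x1 \<in> S \<and> x2 \<in> S \<and> y1 \<in> S \<and> y2 \<in> S) \<Longrightarrow> F x1 x2 y1 y2 = 0"
  shows "(\<Sum>x1\<in>UNIV. \<Sum>x2\<in>UNIV. \<Sum>y1\<in>UNIV. \<Sum>y2\<in>UNIV. F x1 x2 y1 y2)
       = (\<Sum>x1\<in>S. \<Sum>x2\<in>S. \<Sum>y1\<in>S. \<Sum>y2\<in>S. F x1 x2 y1 y2)"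
proof -
  have "(\<Sum>x1\<in>UNIV. \<Sum>x2\<in>UNIV. \<Sum>y1\<in>UNIV. \<Sum>y2\<in>UNIV. F x1 x2 y1 y2)
       = (\<Sum>x1\<in>UNIV. \<Sum>x2\<in>UNIV. \<Sum>y1\<in>UNIV. \<Sum>y2\<in>S. F x1 x2 y1 y2)"
    by (intro sum.cong refl sum_restr) (use assms in auto)
  also have "\<dots> = (\<Sum>x1\<in>UNIV. \<Sum>x2\<in>UNIV. \<Sum>y1\<in>S. \<Sum>y2\<in>S. F x1 x2 y1 y2)"
    by (intro sum.cong refl sum_restr) (use assms in auto)
  also have "\<dots> = (\<Sum>x1\<in>UNIV. \<Sum>x2\<in>S. \<Sum>y1\<in>S. \<Sum>y2\<in>S. F x1 x2 y1 y2)"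
    by (intro sum.cong refl sum_restr) (use assms in auto)
  also have "\<dots> = (\<Sum>x1\<in>S. \<Sum>x2\<in>S. \<Sum>y1\<in>S. \<Sum>y2\<in>S. F x1 x2 y1 y2)"
    by (intro sum.cong refl sum_restr) (use assms in auto)
  finally show ?thesis .
qed

lemma m2_had:
  assumes pq: "p \<noteq> q"
  shows "m2 p b1 p b2 p e1 p e2 = m2 p b1 q b2 p e1 q e2 + m2 p b1 q b2 q e1 p e2"
proof -
  have row: "Hd p q $ p $ x = (if x = p \<or> x = q then hh else 0)" for x
    using pq by (auto simp: Hd_def)
  have ch: "cnj hh = hh" by (simp add: hh_def)
  have h4: "hh * hh * hh * hh = 1/4"
  proof -
    have "hh * hh * hh * hh = (hh*hh)*(hh*hh)" by (simp add: mult_ac)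
    thus ?thesis by (simp add: hh_sq)
  qed
  have "m2 p b1 p b2 p e1 p e2 = (\<Sum>x1\<in>UNIV. \<Sum>x2\<in>UNIV. \<Sum>y1\<in>UNIV. \<Sum>y2\<in>UNIV.
     Hd p q$p$x1 * Hd p q$p$x2 * cnj (Hd p q$p$y1) * cnj (Hd p q$p$y2) * m2 x1 b1 x2 b2 y1 e1 y2 e2)"
    by (rule expand4[OF Hd_unitary[OF pq]])
  also have "\<dots> = hh * hh * hh * hh * (m2 p b1 p b2 p e1 p e2 + m2 q b1 q b2 q e1 q e2
      + m2 p b1 q b2 p e1 q e2 + m2 q b1 p b2 q e1 p e2 + m2 p b1 q b2 q e1 p e2 + m2 q b1 p b2 p e1 q e2)"
    apply (subst sum4_pq[where S="{p,q}"])
     apply (auto simp: row)[1]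
    using pq apply (simp add: row ch m2_zero)
    apply (simp add: algebra_simps)
    done
  finally have E: "m2 p b1 p b2 p e1 p e2 = (m2 p b1 p b2 p e1 p e2 + m2 q b1 q b2 q e1 q e2
      + m2 p b1 q b2 p e1 q e2 + m2 q b1 p b2 q e1 p e2 + m2 p b1 q b2 q e1 p e2 + m2 q b1 p b2 p e1 q e2) / 4"
    using h4 by simp
  have s1: "m2 q b1 q b2 q e1 q e2 = m2 p b1 p b2 p e1 p e2"
    using m2_sw[of q b1 q b2 q e1 q e2 p q] by (simp add: sw_def)
  have s2: "m2 q b1 p b2 q e1 p e2 = m2 p b1 q b2 p e1 q e2"
    using m2_sw[of q b1 p b2 q e1 p e2 p q] by (simp add: sw_def)
  have s3: "m2 q b1 p b2 p e1 q e2 = m2 p b1 q b2 q e1 p e2"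
    using m2_sw[of q b1 p b2 p e1 q e2 p q] by (simp add: sw_def)
  from E have "2 * m2 p b1 p b2 p e1 p e2 = 2 * (m2 p b1 q b2 p e1 q e2 + m2 p b1 q b2 q e1 p e2)"
    unfolding s1 s2 s3 by (simp add: field_simps)
  thus ?thesis by (metis mult_cancel_left zero_neq_numeral)
qed


lemma colsum_int:
  assumes h: "h \<in> borel_measurable borel"
  shows "(\<integral>U. (\<Sum>a\<in>UNIV. cnj (U$a$e) * U$a$b) * h U \<partial>\<mu>) = (if e = b then 1 else 0) * integral\<^sup>L \<mu> h"
proof -
  have "(\<integral>U. (\<Sum>a\<in>UNIV. cnj (U$a$e) * U$a$b) * h U \<partial>\<mu>) = (\<integral>U. (if e = b then 1 else 0) * h U \<partial>\<mu>)"
  proof (rule integral_cong_AE)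
    show "(\<lambda>U. (\<Sum>a\<in>UNIV. cnj (U$a$e) * U$a$b) * h U) \<in> borel_measurable \<mu>"
      by (intro meas_borel borel_measurable_times borel_measurable_continuous_onI continuous_intros h)
    show "(\<lambda>U. (if e = b then 1 else 0) * h U) \<in> borel_measurable \<mu>"
      by (intro meas_borel borel_measurable_times h) simp
    show "AE U in \<mu>. (\<Sum>a\<in>UNIV. cnj (U$a$e) * U$a$b) * h U = (if e = b then 1 else 0) * h U"
      using AE_unit by eventually_elim (simp add: unitary_col)
  qed
  thus ?thesis by simp
qed

lemma R1: "(\<Sum>a\<in>UNIV. m2 a b1 q b2 a e1 q e2) = (if e1 = b1 then 1 else 0) * m1 q b2 q e2"
proof -
  have "(\<Sum>a\<in>UNIV. m2 a b1 q b2 a e1 q e2) = (\<integral>U. (\<Sum>a\<in>UNIV. U$a$b1 * U$q$b2 * cnj (U$a$e1) * cnj (U$q$e2)) \<partial>\<mu>)"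
    unfolding m2_def by (simp add: Bochner_Integration.integral_sum int4)
  also have "\<dots> = (\<integral>U. (\<Sum>a\<in>UNIV. cnj (U$a$e1) * U$a$b1) * (U$q$b2 * cnj (U$q$e2)) \<partial>\<mu>)"
    by (simp add: sum_distrib_right sum_distrib_left mult_ac)
  also have "\<dots> = (if e1 = b1 then 1 else 0) * m1 q b2 q e2"
    unfolding m1_def by (rule colsum_int[OF meas2])
  finally show ?thesis .
qed

lemma R2: "(\<Sum>a\<in>UNIV. m2 a b1 q b2 q e1 a e2) = (if e2 = b1 then 1 else 0) * m1 q b2 q e1"
proof -
  have "(\<Sum>a\<in>UNIV. m2 a b1 q b2 q e1 a e2) = (\<integral>U. (\<Sum>a\<in>UNIV. U$a$b1 * U$q$b2 * cnj (U$q$e1) * cnj (U$a$e2)) \<partial>\<mu>)"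
    unfolding m2_def by (simp add: Bochner_Integration.integral_sum int4)
  also have "\<dots> = (\<integral>U. (\<Sum>a\<in>UNIV. cnj (U$a$e2) * U$a$b1) * (U$q$b2 * cnj (U$q$e1)) \<partial>\<mu>)"
    by (simp add: sum_distrib_right sum_distrib_left mult_ac)
  also have "\<dots> = (if e2 = b1 then 1 else 0) * m1 q b2 q e1"
    unfolding m1_def by (rule colsum_int[OF meas2])
  finally show ?thesis .
qed

lemma sum_split_q:
  fixes f :: "'b::finite \<Rightarrow> complex"
  assumes "\<And>x. x \<noteq> q \<Longrightarrow> f x = c"
  shows "(\<Sum>x\<in>UNIV. f x) = f q + (of_nat CARD('b) - 1) * c"
proof -
  have "(\<Sum>x\<in>UNIV. f x) = f q + (\<Sum>x\<in>UNIV - {q}. f x)"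
    by (simp add: sum.remove)
  also have "(\<Sum>x\<in>UNIV - {q}. f x) = (\<Sum>x\<in>UNIV - {q}. c)"
    by (rule sum.cong) (auto intro: assms)
  also have "\<dots> = of_nat (CARD('b) - 1) * c" by (simp add: card_Diff_singleton)
  also have "of_nat (CARD('b) - 1) = (of_nat CARD('b) - 1 :: complex)"
    by (simp add: of_nat_diff Suc_leI)
  finally show ?thesis .
qed

lemma core:
  fixes p q b1 b2 e1 e2 :: 'a
  assumes pq: "p \<noteq> q" and d2: "CARD('a) \<ge> 2"
  defines "d \<equiv> of_nat CARD('a) :: complex"
  defines "X \<equiv> (if b1 = e1 \<and> b2 = e2 then 1 else 0 :: complex)"
  defines "Y \<equiv> (if b1 = e2 \<and> b2 = e1 then 1 else 0 :: complex)"
  shows "m2 p b1 q b2 p e1 q e2 = (d * X - Y) / (d * (d^2 - 1))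
       \<and> m2 p b1 q b2 q e1 p e2 = (d * Y - X) / (d * (d^2 - 1))"
proof -
  define a where "a = m2 p b1 q b2 p e1 q e2"
  define b where "b = m2 p b1 q b2 q e1 p e2"
  have A1: "m2 x b1 q b2 x e1 q e2 = a" if "x \<noteq> q" for x
    using m2_sw[of x b1 q b2 x e1 q e2 x p] that pq unfolding a_def by (simp add: sw_def)
  have A2: "m2 x b1 q b2 q e1 x e2 = b" if "x \<noteq> q" for x
    using m2_sw[of x b1 q b2 q e1 x e2 x p] that pq unfolding b_def by (simp add: sw_def)
  have A3: "m2 q b1 q b2 q e1 q e2 = a + b"
  proof -
    have "m2 q b1 q b2 q e1 q e2 = m2 q b1 p b2 q e1 p e2 + m2 q b1 p b2 p e1 q e2"
      using m2_had[of q p] pq by simp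
    also have "m2 q b1 p b2 q e1 p e2 = a"
      using m2_sw[of q b1 p b2 q e1 p e2 p q] unfolding a_def by (simp add: sw_def)
    also have "m2 q b1 p b2 p e1 q e2 = b"
      using m2_sw[of q b1 p b2 p e1 q e2 p q] unfolding b_def by (simp add: sw_def)
    finally show ?thesis .
  qed
  have dnz: "d \<noteq> 0" unfolding d_def using d2 by simp
  have d1: "d^2 - 1 \<noteq> 0"
  proof
    assume "d^2 - 1 = 0"
    hence "(of_nat (CARD('a)^2) :: complex) = of_nat 1" unfolding d_def by simp
    hence "CARD('a)^2 = 1" using of_nat_eq_iff by blast
    with d2 show False by simp
  qed
  have E1: "a + b + (d - 1) * a = X / d"
  proof -
    have "(\<Sum>x\<in>UNIV. m2 x b1 q b2 x e1 q e2) = a + b + (d - 1) * a"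
      unfolding d_def by (subst sum_split_q[where q=q and c=a]) (auto simp: A1 A3)
    moreover have "(\<Sum>x\<in>UNIV. m2 x b1 q b2 x e1 q e2) = X / d"
      by (simp add: R1 m1_formula X_def d_def)
    ultimately show ?thesis by simp
  qed
  have E2: "a + b + (d - 1) * b = Y / d"
  proof -
    have "(\<Sum>x\<in>UNIV. m2 x b1 q b2 q e1 x e2) = a + b + (d - 1) * b"
      unfolding d_def by (subst sum_split_q[where q=q and c=b]) (auto simp: A2 A3)
    moreover have "(\<Sum>x\<in>UNIV. m2 x b1 q b2 q e1 x e2) = Y / d"
      by (auto simp: R2 m1_formula Y_def d_def)
    ultimately show ?thesis by simp
  qed
  have XX: "X = d * (a + b + (d - 1) * a)" using E1 dnz by (simp add: field_simps)
  have YY: "Y = d * (a + b + (d - 1) * b)" using E2 dnz by (simp add: field_simps)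
  have "d * X - Y = a * (d * (d^2 - 1))" unfolding XX YY by (simp add: algebra_simps power2_eq_square)
  hence "a = (d * X - Y) / (d * (d^2 - 1))" using dnz d1 by (simp add: field_simps)
  moreover have "d * Y - X = b * (d * (d^2 - 1))" unfolding XX YY by (simp add: algebra_simps power2_eq_square)
  hence "b = (d * Y - X) / (d * (d^2 - 1))" using dnz d1 by (simp add: field_simps)
  ultimately show ?thesis unfolding a_def b_def by simp
qed


definition alpha where "alpha b1 b2 e1 e2 = (of_nat CARD('a) * (if b1 = e1 \<and> b2 = e2 then 1 else 0) - (if b1 = e2 \<and> b2 = e1 then 1 else 0))
   / (of_nat CARD('a) * ((of_nat CARD('a))^2 - 1) :: complex)"
definition beta where "beta b1 b2 e1 e2 = (of_nat CARD('a) * (if b1 = e2 \<and> b2 = e1 then 1 else 0) - (if b1 = e1 \<and> b2 = e2 then 1 else 0))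
   / (of_nat CARD('a) * ((of_nat CARD('a))^2 - 1) :: complex)"

lemma m2_formula:
  fixes a1 a2 c1 c2 b1 b2 e1 e2 :: 'a
  assumes d2: "CARD('a) \<ge> 2"
  shows "m2 a1 b1 a2 b2 c1 e1 c2 e2 = (if a1 = c1 \<and> a2 = c2 then alpha b1 b2 e1 e2 else 0)
        + (if a1 = c2 \<and> a2 = c1 then beta b1 b2 e1 e2 else 0)"
proof (cases "a1 = c1 \<and> a2 = c2 \<or> a1 = c2 \<and> a2 = c1")
  case False
  hence z: "m2 a1 b1 a2 b2 c1 e1 c2 e2 = 0" by (rule m2_zero)
  have n1: "(a1 = c1 \<and> a2 = c2) = False" and n2: "(a1 = c2 \<and> a2 = c1) = False" using False by blast+
  show ?thesis by (simp only: z n1 n2 if_False add_0)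
next
  case True
  show ?thesis
  proof (cases "a1 = a2")
    case eq: True
    with True have c: "c1 = a1" "c2 = a1" by blast+
    obtain p :: 'a where p: "p \<noteq> a1"
    proof -
      have "card (UNIV - {a1}) = CARD('a) - 1" by (rule card_Diff_singleton) simp_all
      hence "card (UNIV - {a1}) > 0" using d2 by linarith
      hence "UNIV - {a1} \<noteq> {}" by (simp only: card_gt_0_iff) blast
      thus ?thesis using that by blast
    qed
    have cp: "m2 a1 b1 p b2 a1 e1 p e2 = alpha b1 b2 e1 e2 \<and> m2 a1 b1 p b2 p e1 a1 e2 = beta b1 b2 e1 e2"
      unfolding alpha_def beta_def by (rule core[OF p[symmetric] d2])
    have "m2 a1 b1 a1 b2 a1 e1 a1 e2 = m2 a1 b1 p b2 a1 e1 p e2 + m2 a1 b1 p b2 p e1 a1 e2"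
      by (rule m2_had) (use p in auto)
    also have "\<dots> = alpha b1 b2 e1 e2 + beta b1 b2 e1 e2"
      using cp by (simp only:)
    finally have "m2 a1 b1 a1 b2 a1 e1 a1 e2 = alpha b1 b2 e1 e2 + beta b1 b2 e1 e2" .
    thus ?thesis using c eq by (simp only: simp_thms if_True)
  next
    case ne: False
    have cr: "m2 a1 b1 a2 b2 a1 e1 a2 e2 = alpha b1 b2 e1 e2 \<and> m2 a1 b1 a2 b2 a2 e1 a1 e2 = beta b1 b2 e1 e2"
      unfolding alpha_def beta_def by (rule core[OF ne d2])
    show ?thesis
    proof (cases "a1 = c1 \<and> a2 = c2")
      case t: True
      hence "\<not> (a1 = c2 \<and> a2 = c1)" using ne by blast
      have e: "c1 = a1" "c2 = a2" using t by blast+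
      have n: "(a1 = a2) = False" using ne by blast
      show ?thesis using cr unfolding e by (simp only: n if_False if_True simp_thms add_0_right)
    next
      case f: False
      with True have t: "a1 = c2 \<and> a2 = c1" by blast
      have e: "c1 = a2" "c2 = a1" using t by blast+
      have n: "(a2 = a1) = False" "(a1 = a2) = False" using ne by blast+
      show ?thesis using cr unfolding e by (simp only: n if_False if_True simp_thms add_0_left)
    qed
  qed
qed


lemma if_conj0: "(if A \<and> B' then x else (0::complex)) = (if A then (if B' then x else 0) else 0)" by simp

lemma intS:
  fixes B :: "'a \<Rightarrow> 'a \<Rightarrow> 'a \<Rightarrow> 'a \<Rightarrow> complex"
  shows "integrable \<mu> (\<lambda>U. SB B U)"
    and "(\<integral>U. SB B U \<partial>\<mu>) = (\<Sum>i\<in>UNIV. \<Sum>k\<in>UNIV. B i k i k) / of_nat CARD('a)"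
proof -
  have alt: "SB B U = (\<Sum>i\<in>UNIV. \<Sum>j\<in>UNIV. \<Sum>k\<in>UNIV. \<Sum>l\<in>UNIV. B i k j l * (U$i$k * cnj (U$j$l)))" for U
    by (simp add: SB_def mult_ac)
  show "integrable \<mu> (\<lambda>U. SB B U)"
    unfolding alt by (simp add: integrable_sum integrable_mult_right int2)
  have "(\<integral>U. SB B U \<partial>\<mu>) = (\<Sum>i\<in>UNIV. \<Sum>j\<in>UNIV. \<Sum>k\<in>UNIV. \<Sum>l\<in>UNIV. B i k j l * m1 i k j l)"
    unfolding alt m1_def by (simp add: Bochner_Integration.integral_sum integrable_sum integrable_mult_right int2)
  also have "\<dots> = (\<Sum>i\<in>UNIV. \<Sum>k\<in>UNIV. B i k i k / of_nat CARD('a))"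
    by (simp add: m1_formula if_conj0)
  also have "\<dots> = (\<Sum>i\<in>UNIV. \<Sum>k\<in>UNIV. B i k i k) / of_nat CARD('a)"
    by (simp add: sum_divide_distrib)
  finally show "(\<integral>U. SB B U \<partial>\<mu>) = (\<Sum>i\<in>UNIV. \<Sum>k\<in>UNIV. B i k i k) / of_nat CARD('a)" .
qed

lemma intSS:
  fixes B :: "'a \<Rightarrow> 'a \<Rightarrow> 'a \<Rightarrow> 'a \<Rightarrow> complex"
  shows "integrable \<mu> (\<lambda>U. SB B U * cnj (SB B U))"
    and "(\<integral>U. SB B U * cnj (SB B U) \<partial>\<mu>) = sum8 (\<lambda>i j k l i' j' k' l'. B i k j l * cnj (B i' k' j' l') * m2 i k j' l' j l i' k')"
proof -
  show "integrable \<mu> (\<lambda>U. SB B U * cnj (SB B U))"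
    unfolding SS_pointwise sum8_def by (simp add: integrable_sum integrable_mult_right int4)
  show "(\<integral>U. SB B U * cnj (SB B U) \<partial>\<mu>) = sum8 (\<lambda>i j k l i' j' k' l'. B i k j l * cnj (B i' k' j' l') * m2 i k j' l' j l i' k')"
    unfolding SS_pointwise sum8_def m2_def
    by (simp add: Bochner_Integration.integral_sum integrable_sum integrable_mult_right int4)
qed


lemma ESS:
  fixes B :: "'a \<Rightarrow> 'a \<Rightarrow> 'a \<Rightarrow> 'a \<Rightarrow> complex"
  assumes d2: "CARD('a) \<ge> 2"
  shows "(\<integral>U. SB B U * cnj (SB B U) \<partial>\<mu>) =
    (of_nat CARD('a) * ((\<Sum>i\<in>UNIV. \<Sum>k\<in>UNIV. B i k i k) * cnj (\<Sum>i\<in>UNIV. \<Sum>k\<in>UNIV. B i k i k))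
     - of_real (\<Sum>k\<in>UNIV. \<Sum>l\<in>UNIV. (cmod (\<Sum>i\<in>UNIV. B i k i l))^2)
     + of_nat CARD('a) * of_real (\<Sum>i\<in>UNIV. \<Sum>j\<in>UNIV. \<Sum>k\<in>UNIV. \<Sum>l\<in>UNIV. (cmod (B i k j l))^2)
     - of_real (\<Sum>i\<in>UNIV. \<Sum>j\<in>UNIV. (cmod (\<Sum>k\<in>UNIV. B i k j k))^2))
    / (of_nat CARD('a) * ((of_nat CARD('a))^2 - 1))"
proof -
  let ?d = "of_nat CARD('a) :: complex"
  let ?D = "of_nat CARD('a) * ((of_nat CARD('a))^2 - 1) :: complex"
  have pw: "m2 i k j' l' j l i' k' = (?d * (ind (i = j) * ind (j' = i') * ind (k = l) * ind (l' = k'))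
      - ind (i = j) * ind (j' = i') * ind (k = k') * ind (l' = l)
      + ?d * (ind (i = i') * ind (j' = j) * ind (k = k') * ind (l' = l))
      - ind (i = i') * ind (j' = j) * ind (k = l) * ind (l' = k')) / ?D" for i j k l i' j' k' l'
    unfolding m2_formula[OF d2] alpha_def beta_def ind_def[symmetric] by (rule ind_identity)
  have "(\<integral>U. SB B U * cnj (SB B U) \<partial>\<mu>) = sum8 (\<lambda>i j k l i' j' k' l'. B i k j l * cnj (B i' k' j' l') * m2 i k j' l' j l i' k')"
    by (rule intSS(2))
  also have "\<dots> = sum8 (\<lambda>i j k l i' j' k' l'. (?d * (B i k j l * cnj (B i' k' j' l') * (ind (i = j) * ind (j' = i') * ind (k = l) * ind (l' = k')))
      - B i k j l * cnj (B i' k' j' l') * (ind (i = j) * ind (j' = i') * ind (k = k') * ind (l' = l))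
      + ?d * (B i k j l * cnj (B i' k' j' l') * (ind (i = i') * ind (j' = j) * ind (k = k') * ind (l' = l)))
      - B i k j l * cnj (B i' k' j' l') * (ind (i = i') * ind (j' = j) * ind (k = l) * ind (l' = k'))) / ?D)"
    unfolding pw F_lin ..
  also have "\<dots> = (?d * sum8 (\<lambda>i j k l i' j' k' l'. B i k j l * cnj (B i' k' j' l') * (ind (i = j) * ind (j' = i') * ind (k = l) * ind (l' = k')))
      - sum8 (\<lambda>i j k l i' j' k' l'. B i k j l * cnj (B i' k' j' l') * (ind (i = j) * ind (j' = i') * ind (k = k') * ind (l' = l)))
      + ?d * sum8 (\<lambda>i j k l i' j' k' l'. B i k j l * cnj (B i' k' j' l') * (ind (i = i') * ind (j' = j) * ind (k = k') * ind (l' = l)))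
      - sum8 (\<lambda>i j k l i' j' k' l'. B i k j l * cnj (B i' k' j' l') * (ind (i = i') * ind (j' = j) * ind (k = l) * ind (l' = k')))) / ?D"
    by (rule sum8_lin)
  also have "\<dots> = (of_nat CARD('a) * ((\<Sum>i\<in>UNIV. \<Sum>k\<in>UNIV. B i k i k) * cnj (\<Sum>i\<in>UNIV. \<Sum>k\<in>UNIV. B i k i k))
     - of_real (\<Sum>k\<in>UNIV. \<Sum>l\<in>UNIV. (cmod (\<Sum>i\<in>UNIV. B i k i l))^2)
     + of_nat CARD('a) * of_real (\<Sum>i\<in>UNIV. \<Sum>j\<in>UNIV. \<Sum>k\<in>UNIV. \<Sum>l\<in>UNIV. (cmod (B i k j l))^2)
     - of_real (\<Sum>i\<in>UNIV. \<Sum>j\<in>UNIV. (cmod (\<Sum>k\<in>UNIV. B i k j k))^2))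
    / (of_nat CARD('a) * ((of_nat CARD('a))^2 - 1))"
    unfolding sum8_def ind_def S11 S1Y S2Y S2X ..
  finally show ?thesis .
qed


lemma diag_le:
  fixes G :: "'a \<Rightarrow> 'a \<Rightarrow> complex"
  shows "(cmod (\<Sum>i\<in>UNIV. G i i))^2 \<le> real CARD('a) * (\<Sum>i\<in>UNIV. \<Sum>j\<in>UNIV. (cmod (G i j))^2)"
proof -
  have "(cmod (\<Sum>i\<in>UNIV. G i i))^2 \<le> real CARD('a) * (\<Sum>i\<in>UNIV. (cmod (G i i))^2)"
    by (rule cs_sum)
  also have "(\<Sum>i\<in>UNIV. (cmod (G i i))^2) \<le> (\<Sum>i\<in>UNIV. \<Sum>j\<in>UNIV. (cmod (G i j))^2)"
    by (intro sum_mono member_le_sum) auto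
  finally show ?thesis by (simp add: mult_left_mono)
qed

lemma block:
  fixes B :: "'a \<Rightarrow> 'a \<Rightarrow> 'a \<Rightarrow> 'a \<Rightarrow> complex"
  assumes d2: "CARD('a) \<ge> 2"
  defines "f \<equiv> \<lambda>U. of_nat CARD('a)^2 * (1 / of_nat CARD('a)) * SB B U"
  shows "integrable \<mu> (\<lambda>U. (cmod (f U - integral\<^sup>L \<mu> f))^2)"
    and "(\<integral>U. (cmod (f U - integral\<^sup>L \<mu> f))^2 \<partial>\<mu>) \<le> 4/3 * (\<Sum>i\<in>UNIV. \<Sum>j\<in>UNIV. \<Sum>k\<in>UNIV. \<Sum>l\<in>UNIV. (cmod (B i k j l))^2)"
proof -
  interpret prob_space \<mu> by (rule ps)
  define dc where "dc = (of_nat CARD('a) :: complex)"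
  define dr where "dr = real CARD('a)"
  define T where "T = (\<Sum>i\<in>UNIV. \<Sum>k\<in>UNIV. B i k i k)"
  define t where "t = (cmod T)^2"
  define pb where "pb = (\<Sum>k\<in>UNIV. \<Sum>l\<in>UNIV. (cmod (\<Sum>i\<in>UNIV. B i k i l))^2)"
  define pa where "pa = (\<Sum>i\<in>UNIV. \<Sum>j\<in>UNIV. (cmod (\<Sum>k\<in>UNIV. B i k j k))^2)"
  define n where "n = (\<Sum>i\<in>UNIV. \<Sum>j\<in>UNIV. \<Sum>k\<in>UNIV. \<Sum>l\<in>UNIV. (cmod (B i k j l))^2)"
  have dcnz: "dc \<noteq> 0" unfolding dc_def using d2 by simp
  have dcr: "dc = of_real dr" unfolding dc_def dr_def by simp
  have cdc: "cnj dc = dc" unfolding dcr by simp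
  have fd: "f = (\<lambda>U. dc * SB B U)"
    unfolding f_def dc_def[symmetric] using dcnz by (simp add: power2_eq_square)
  have mf: "integral\<^sup>L \<mu> f = T"
    unfolding fd using intS(2)[of B] dcnz by (simp add: T_def dc_def)
  define h where "h = (\<lambda>U. (f U - T) * cnj (f U - T))"
  have hexp: "h = (\<lambda>U. dc * dc * (SB B U * cnj (SB B U)) - dc * cnj T * SB B U - dc * T * cnj (SB B U) + T * cnj T)"
    unfolding h_def fd by (rule ext) (simp add: cdc algebra_simps)
  have hint: "integrable \<mu> h"
    unfolding hexp by (intro Bochner_Integration.integrable_diff Bochner_Integration.integrable_add
       integrable_mult_right integrable_cnj intSS(1) intS(1) integrable_const)
  have hval: "integral\<^sup>L \<mu> h = dc * dc * (\<integral>U. SB B U * cnj (SB B U) \<partial>\<mu>) - T * cnj T"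
  proof -
    have "integral\<^sup>L \<mu> h = dc * dc * (\<integral>U. SB B U * cnj (SB B U) \<partial>\<mu>) - dc * cnj T * (\<integral>U. SB B U \<partial>\<mu>)
        - dc * T * cnj (\<integral>U. SB B U \<partial>\<mu>) + T * cnj T"
      unfolding hexp
      by (simp add: Bochner_Integration.integral_diff Bochner_Integration.integral_add
          Bochner_Integration.integrable_diff Bochner_Integration.integrable_add
          integrable_mult_right intSS(1) intS(1) prob_space.prob_space[OF ps])
    also have "\<dots> = dc * dc * (\<integral>U. SB B U * cnj (SB B U) \<partial>\<mu>) - T * cnj T"
      unfolding intS(2) dc_def[symmetric] T_def[symmetric] using dcnz by (simp add: cdc)
    finally show ?thesis .
  qed
  have gpw: "(cmod (f U - integral\<^sup>L \<mu> f))^2 = Re (h U)" for U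
    unfolding h_def mf by (simp only: complex_norm_square[symmetric] Re_complex_of_real)
  show gint: "integrable \<mu> (\<lambda>U. (cmod (f U - integral\<^sup>L \<mu> f))^2)"
    unfolding gpw using hint by simp
  have "complex_of_real (\<integral>U. (cmod (f U - integral\<^sup>L \<mu> f))^2 \<partial>\<mu>) = integral\<^sup>L \<mu> h"
    unfolding h_def mf integral_complex_of_real[symmetric] complex_norm_square ..
  also have "\<dots> = complex_of_real (dr^2 * (dr * t - pb + dr * n - pa) / (dr * (dr^2 - 1)) - t)"
    unfolding hval ESS[OF d2] T_def[symmetric] dc_def[symmetric] pb_def[symmetric] pa_def[symmetric] n_def[symmetric]
    unfolding dcr t_def complex_norm_square[symmetric]
    by (simp add: power2_eq_square)
  finally have eq: "(\<integral>U. (cmod (f U - integral\<^sup>L \<mu> f))^2 \<partial>\<mu>) = dr^2 * (dr * t - pb + dr * n - pa) / (dr * (dr^2 - 1)) - t"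
    using of_real_eq_iff by blast
  have d2r: "dr \<ge> 2" unfolding dr_def using d2 by simp
  have ta: "t \<le> dr * pa"
    unfolding t_def T_def pa_def dr_def by (rule diag_le[of "\<lambda>i j. \<Sum>k\<in>UNIV. B i k j k"])
  have tb: "t \<le> dr * pb"
  proof -
    have "T = (\<Sum>k\<in>UNIV. \<Sum>i\<in>UNIV. B i k i k)" unfolding T_def by (rule sum.swap)
    thus ?thesis unfolding t_def pb_def dr_def by (simp add: diag_le[of "\<lambda>k l. \<Sum>i\<in>UNIV. B i k i l"])
  qed
  have t0: "t \<ge> 0" unfolding t_def by simp
  have n0: "n \<ge> 0" unfolding n_def by (simp add: sum_nonneg)
  show "(\<integral>U. (cmod (f U - integral\<^sup>L \<mu> f))^2 \<partial>\<mu>) \<le> 4/3 * (\<Sum>i\<in>UNIV. \<Sum>j\<in>UNIV. \<Sum>k\<in>UNIV. \<Sum>l\<in>UNIV. (cmod (B i k j l))^2)"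
    unfolding eq n_def[symmetric] by (rule final_ineq[OF d2r ta tb t0 n0])
qed


end

lemma sum_UNIV_pair: "(\<Sum>p\<in>(UNIV::('p::finite \<times> 'q::finite) set). h p) = (\<Sum>a\<in>UNIV. \<Sum>b\<in>UNIV. h (a,b))"
  by (subst UNIV_Times_UNIV[symmetric]) (simp add: sum.cartesian_product)

lemma reidx:
  fixes g :: "('a::finite \<times> 'c::finite \<times> 'a \<times> 'e::finite) \<Rightarrow> ('a \<times> 'c \<times> 'a \<times> 'e) \<Rightarrow> real"
  shows "(\<Sum>x\<in>(UNIV::('c \<times> 'e) set). \<Sum>y\<in>(UNIV::('c \<times> 'e) set). \<Sum>i\<in>UNIV. \<Sum>j\<in>UNIV. \<Sum>k\<in>UNIV. \<Sum>l\<in>UNIV.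
           g (i, fst x, k, snd x) (j, fst y, l, snd y))
       = (\<Sum>x'\<in>UNIV. \<Sum>y'\<in>UNIV. g x' y')"
proof -
  let ?G = "\<lambda>(x::'c \<times> 'e, y::'c \<times> 'e, i::'a, j::'a, k::'a, l::'a). g (i, fst x, k, snd x) (j, fst y, l, snd y)"
  have "(\<Sum>x\<in>(UNIV::('c \<times> 'e) set). \<Sum>y\<in>(UNIV::('c \<times> 'e) set). \<Sum>i\<in>UNIV. \<Sum>j\<in>UNIV. \<Sum>k\<in>UNIV. \<Sum>l\<in>UNIV.
           g (i, fst x, k, snd x) (j, fst y, l, snd y)) = (\<Sum>q\<in>UNIV. ?G q)"
    by (simp add: sum_UNIV_pair)
  also have "\<dots> = (\<Sum>p\<in>UNIV. g (fst p) (snd p))"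
    by (rule sum.reindex_bij_witness[where j = "\<lambda>(x, y, i, j, k, l). ((i, fst x, k, snd x), (j, fst y, l, snd y))"
        and i = "\<lambda>((i, c, k, e), (j, c', l, e')). ((c, e), (c', e'), i, j, k, l)"]) auto
  also have "\<dots> = (\<Sum>x'\<in>UNIV. \<Sum>y'\<in>UNIV. g x' y')"
    by (simp only: sum_UNIV_pair[of "\<lambda>p. g (fst p) (snd p)"] fst_conv snd_conv)
  finally show ?thesis .
qed

theorem lemma3p1:
  fixes Y :: "'a::finite \<times> 'c::finite \<times> 'a \<times> 'e::finite \<Rightarrow> 'a \<times> 'c \<times> 'a \<times> 'e \<Rightarrow> complex"
    and \<mu> :: "(complex^'a^'a) measure"
  assumes "CARD('a) \<ge> 2"
    and "haar_measure \<mu>"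
  shows "(\<integral>U. hs_norm_sq (\<lambda>x y. Theta Y U x y - (\<integral>V. Theta Y V x y \<partial>\<mu>)) \<partial>\<mu>)
           \<le> 4 / 3 * hs_norm_sq Y"
proof -
  note d2 = assms(1) and haar = assms(2)
  define Bf where "Bf = (\<lambda>(x::'c \<times> 'e) (y::'c \<times> 'e) i k j l. Y (i, fst x, k, snd x) (j, fst y, l, snd y))"
  have th: "(\<lambda>U. Theta Y U x y) = (\<lambda>U. of_nat CARD('a)^2 * (1 / of_nat CARD('a)) * SB (Bf x y) U)" for x y
    by (rule ext) (cases x; cases y; simp add: Theta_def SB_def Bf_def)
  have th': "Theta Y U x y = of_nat CARD('a)^2 * (1 / of_nat CARD('a)) * SB (Bf x y) U" for x y U
    using th[of x y] by (metis)
  have int: "integrable \<mu> (\<lambda>U. (cmod (Theta Y U x y - (\<integral>V. Theta Y V x y \<partial>\<mu>)))^2)" for x y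
    unfolding th' by (rule block(1)[OF haar d2])
  have bd: "(\<integral>U. (cmod (Theta Y U x y - (\<integral>V. Theta Y V x y \<partial>\<mu>)))^2 \<partial>\<mu>)
      \<le> 4/3 * (\<Sum>i\<in>UNIV. \<Sum>j\<in>UNIV. \<Sum>k\<in>UNIV. \<Sum>l\<in>UNIV. (cmod (Y (i, fst x, k, snd x) (j, fst y, l, snd y)))^2)" for x y
    unfolding th' using block(2)[OF haar d2, of "Bf x y"] by (simp add: Bf_def)
  have "(\<integral>U. hs_norm_sq (\<lambda>x y. Theta Y U x y - (\<integral>V. Theta Y V x y \<partial>\<mu>)) \<partial>\<mu>)
      = (\<Sum>x\<in>UNIV. \<Sum>y\<in>UNIV. (\<integral>U. (cmod (Theta Y U x y - (\<integral>V. Theta Y V x y \<partial>\<mu>)))^2 \<partial>\<mu>))"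
    unfolding hs_norm_sq_def
    by (simp add: Bochner_Integration.integral_sum integrable_sum int)
  also have "\<dots> \<le> (\<Sum>x\<in>UNIV. \<Sum>y\<in>UNIV. 4/3 * (\<Sum>i\<in>UNIV. \<Sum>j\<in>UNIV. \<Sum>k\<in>UNIV. \<Sum>l\<in>UNIV. (cmod (Y (i, fst x, k, snd x) (j, fst y, l, snd y)))^2))"
    by (intro sum_mono bd)
  also have "\<dots> = 4/3 * (\<Sum>x\<in>(UNIV::('c \<times> 'e) set). \<Sum>y\<in>(UNIV::('c \<times> 'e) set). \<Sum>i\<in>UNIV. \<Sum>j\<in>UNIV. \<Sum>k\<in>UNIV. \<Sum>l\<in>UNIV. (cmod (Y (i, fst x, k, snd x) (j, fst y, l, snd y)))^2)"
    by (simp add: sum_distrib_left)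
  also have "\<dots> = 4/3 * hs_norm_sq Y"
    unfolding hs_norm_sq_def by (subst reidx[of "\<lambda>x' y'. (cmod (Y x' y'))^2"]) (rule refl)
  finally show ?thesis .
qed

end
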